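(* Let $q$ be a prime power, $d$ a positive divisor of $q-1$, $m=\frac{q-1}{d}$, $\omega$ a primitive root of $\mathbb{F}_q$ and $\zeta=\omega^{m}$. Let $P\in\mathbb{F}_q[T]$ be nonzero with $\deg P\le q-1$. Let $\rho_0<\rho_1<\dots<\rho_{k-1}$ be the distinct values $\operatorname{rem}(n)$ where $n$ ranges over the degrees of the monomials of $P$ with nonzero coefficient, and $\operatorname{rem}(n)$ denotes the unique element of $\{1,\dots,m\}$ congruent to $n$ mod $m$. For $\ell=0,\dots,k-1$ let $\vec v_\ell\in\mathbb{F}_q^d$ have $j$-th entry ($j=0,\dots,d-1$) equal to the coefficient of $T^{jm+\rho_\ell}$ in $P$, and let $\vec b_\ell=(b^{(\ell)}_0,\dots,b^{(\ell)}_{d-1})\in\mathbb{F}_q^d$ be the unique vector with $(\vec v_\ell)_j=\frac1d\sum_{i=0}^{d-1}\zeta^{-ij}b^{(\ell)}_i$ for all $j$. Put $S_0=\{i: b^{(0)}_i\neq0\text{ or } b^{(\ell')}_i=0\text{ for all }\ell'\}$ and $S_\ell=\{i:b^{(\ell)}_i\neq0\}$ for $\ell>0$. Then $P$ is the polynomial form of an index $d$ generalized cyclotomic mapping of $\mathbb{F}_q$ if and only if $P(0)=0$, $k\le d$, and the sets $S_0,\dots,S_{k-1}$ are pairwise disjoint with union $\{0,\dots,d-1\}$. In that case, letting $\ell(i)$ be the index with $i\in S_{\ell(i)}$, $P$ is the polynomial form of $f_\omega(\vec a,\vec r)$ with $a_i=b^{(\ell(i))}_i$ and $r_i=\rho_{\ell(i)}$.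 (The zero polynomial is the polynomial form of $f_\omega((0,\dots,0),(1,\dots,1))$.)
   Context: Let $C_i=\omega^iC$ where $C$ is the index $d$ subgroup of $\mathbb{F}_q^{\ast}$. For $\vec a\in\mathbb{F}_q^d$ and $\vec r\in\{1,\dots,m\}^d$, $f_\omega(\vec a,\vec r):\mathbb{F}_q\to\mathbb{F}_q$ maps $0\mapsto0$ and $x\mapsto a_ix^{r_i}$ for $x\in C_i$; such maps are the index $d$ generalized cyclotomic mappings. The polynomial form of a function $f:\mathbb{F}_q\to\mathbb{F}_q$ is the unique polynomial of degree at most $q-1$ that agrees with $f$ on $\mathbb{F}_q$. *)

theory Defs
  imports "HOL-Computational_Algebra.Polynomial"
begin

definition primitive_root :: "'a::{finite,field} \<Rightarrow> bool" where
  "primitive_root w \<longleftrightarrow> (\<forall>x. x \<noteq> 0 \<longrightarrow> (\<exists>n::nat. x = w ^ n))"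

definition index_subgroup :: "nat \<Rightarrow> 'a::{finite,field} set" where
  "index_subgroup d = {x ^ d | x. x \<noteq> 0}"

definition cyc_coset :: "'a::{finite,field} \<Rightarrow> nat \<Rightarrow> nat \<Rightarrow> 'a set" where
  "cyc_coset w d i = (\<lambda>y. w ^ i * y) ` index_subgroup d"

definition gen_cyc_map ::
  "'a::{finite,field} \<Rightarrow> nat \<Rightarrow> (nat \<Rightarrow> 'a) \<Rightarrow> (nat \<Rightarrow> nat) \<Rightarrow> 'a \<Rightarrow> 'a" where
  "gen_cyc_map w d a r x =
     (if x = 0 then 0
      else (let i = (THE i. i < d \<and> x \<in> cyc_coset w d i) in a i * x ^ r i))"

definition poly_form :: "'a::{finite,field} poly \<Rightarrow> ('a \<Rightarrow> 'a) \<Rightarrow> bool" where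
  "poly_form P f \<longleftrightarrow> degree P \<le> card (UNIV :: 'a set) - 1 \<and> (\<forall>x. poly P x = f x)"

definition rem1 :: "nat \<Rightarrow> nat \<Rightarrow> nat" where
  "rem1 m n = (THE t. t \<in> {1..m} \<and> t mod m = n mod m)"

end

theory Submission imports Defs begin

lemma fin_pow_card_minus1:
  fixes x :: "'a::{finite,field}"
  assumes "x \<noteq> 0" shows "x ^ (card (UNIV::'a set) - 1) = 1"
proof -
  let ?U = "UNIV - {0::'a}"
  have cU: "card ?U = card (UNIV::'a set) - 1" by (simp add: card_Diff_singleton)
  have bij: "bij_betw (\<lambda>y. x * y) ?U ?U"
    by (rule bij_betw_byWitness[where f'="\<lambda>y. inverse x * y"]) (use assms in auto)
  have "prod (\<lambda>y. y) ?U = prod (\<lambda>y. x * y) ?U"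
    using prod.reindex_bij_betw[OF bij, of "\<lambda>y. y"] by simp
  also have "\<dots> = x ^ card ?U * prod (\<lambda>y. y) ?U"
    by (simp add: prod.distrib)
  finally have "x ^ card ?U * prod (\<lambda>y. y) ?U = 1 * prod (\<lambda>y. y) ?U" by simp
  moreover have "prod (\<lambda>y. y) ?U \<noteq> 0" by (simp add: prod_zero_iff)
  ultimately show ?thesis using cU by (metis mult_right_cancel)
qed

lemma fin_char_card:
  "(of_nat (card (UNIV::'a set)) :: 'a::{finite,field}) = 0"
proof -
  have bij: "bij_betw (\<lambda>y::'a. 1 + y) UNIV UNIV"
    by (rule bij_betw_byWitness[where f'="\<lambda>y. y - 1"]) auto
  have "sum (\<lambda>y. y) (UNIV::'a set) = sum (\<lambda>y. 1 + y) UNIV"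
    using sum.reindex_bij_betw[OF bij, of "\<lambda>y. y"] by simp
  also have "\<dots> = of_nat (card (UNIV::'a set)) + sum (\<lambda>y. y) UNIV"
    by (simp add: sum.distrib)
  finally show ?thesis by simp
qed

lemma card_ge2: "card (UNIV::'a::{finite,field} set) \<ge> 2"
proof -
  have "{0::'a,1} \<subseteq> UNIV" by simp
  hence "card {0::'a,1} \<le> card (UNIV::'a set)" by (rule card_mono[OF finite_UNIV])
  thus ?thesis by simp
qed

lemma ortho:
  fixes z :: "'a::field"
  assumes np: "n > 0" and n: "n = 1 \<or> (z ^ n = 1 \<and> (\<forall>k. 0 < k \<and> k < n \<longrightarrow> z ^ k \<noteq> 1))"
  shows "(\<Sum>t<n. z ^ (t * a) * inverse z ^ (t * c)) = (if a mod n = c mod n then of_nat n else 0)"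
proof (cases "n = 1")
  case True thus ?thesis by simp
next
  case False
  with n have zn: "z ^ n = 1" and zk: "\<And>k. 0 < k \<Longrightarrow> k < n \<Longrightarrow> z ^ k \<noteq> 1" by auto
  have z0: "z \<noteq> 0" using zn np by (auto simp: power_0_left)
  have zmod: "z ^ e = z ^ (e mod n)" for e
  proof -
    have "z ^ e = z ^ (n * (e div n) + e mod n)" by simp
    also have "\<dots> = (z ^ n) ^ (e div n) * z ^ (e mod n)" by (simp only: power_add power_mult)
    finally show ?thesis using zn by simp
  qed
  define u where "u = z ^ a * inverse z ^ c"
  have ut: "z ^ (t * a) * inverse z ^ (t * c) = u ^ t" for t
    by (simp add: u_def power_mult_distrib power_mult mult.commute)
  have un: "u ^ n = 1"
  proof -
    have "u ^ n = (z ^ n) ^ a * inverse ((z ^ n) ^ c)"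
      by (simp add: u_def power_mult_distrib power_inverse flip: power_mult) (simp add: mult.commute)
    thus ?thesis using zn by simp
  qed
  show ?thesis
  proof (cases "a mod n = c mod n")
    case True
    have "z ^ a = z ^ c" using True zmod[of a] zmod[of c] by simp
    hence "u = 1" unfolding u_def using z0 by (simp add: power_inverse)
    thus ?thesis using True ut by simp
  next
    case ne: False
    have "u \<noteq> 1"
    proof
      assume "u = 1"
      hence "z ^ a = z ^ c" unfolding u_def using z0 by (simp add: power_inverse field_simps)
      hence eq: "z ^ (a mod n) = z ^ (c mod n)" by (metis zmod)
      have am: "a mod n < n" "c mod n < n" using np by auto
      show False
      proof (cases "a mod n < c mod n")
        case True
        have "z ^ (c mod n) = z ^ (a mod n) * z ^ (c mod n - a mod n)"
          using True by (simp flip: power_add)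
        hence "z ^ (c mod n - a mod n) = 1" using eq z0 by simp
        thus False using zk[of "c mod n - a mod n"] True am by simp
      next
        case False
        hence lt: "c mod n < a mod n" using ne by simp
        have "z ^ (a mod n) = z ^ (c mod n) * z ^ (a mod n - c mod n)"
          using lt by (simp flip: power_add)
        hence "z ^ (a mod n - c mod n) = 1" using eq z0 by simp
        thus False using zk[of "a mod n - c mod n"] lt am by simp
      qed
    qed
    thus ?thesis using ne ut un by (simp add: sum_gp_strict)
  qed
qed


lemma rem1_eq: assumes "m > 0" shows "rem1 m n = (if n mod m = 0 then m else n mod m)"
  unfolding rem1_def
proof (rule the_equality)
  show "(if n mod m = 0 then m else n mod m) \<in> {1..m} \<and> (if n mod m = 0 then m else n mod m) mod m = n mod m"
    using assms by (auto simp: less_imp_le_nat)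
next
  fix t assume t: "t \<in> {1..m} \<and> t mod m = n mod m"
  show "t = (if n mod m = 0 then m else n mod m)"
  proof (cases "t = m")
    case True thus ?thesis using t by auto
  next
    case False
    hence "t < m" using t by auto
    thus ?thesis using t by auto
  qed
qed

lemma rem1_range: "m > 0 \<Longrightarrow> rem1 m n \<in> {1..m}"
  by (auto simp: rem1_eq less_imp_le_nat)

lemma rem1_mod: "m > 0 \<Longrightarrow> rem1 m n mod m = n mod m"
  by (auto simp: rem1_eq)

lemma decomp:
  assumes m: "m > 0" and n: "1 \<le> n" "n \<le> D * m"
  shows "\<exists>j<D. n = j * m + rem1 m n"
proof (cases "n mod m = 0")
  case True
  define q where "q = n div m"
  have nq: "n = q * m" using True q_def by auto
  have "q \<ge> 1" using n nq by (cases q) auto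
  moreover have "q \<le> D" using n nq m by auto
  moreover have "(q - 1) * m + m = q * m" using \<open>q \<ge> 1\<close> by (cases q) auto
  ultimately show ?thesis using nq True m
    by (intro exI[of _ "q - 1"]) (simp add: rem1_eq)
next
  case False
  have nq: "n = n div m * m + n mod m" by simp
  have "n \<noteq> D * m" using False by auto
  hence "n < D * m" using n by simp
  hence "n div m < D" using m by (simp add: div_less_iff_less_mult)
  thus ?thesis using False m nq by (intro exI[of _ "n div m"]) (simp add: rem1_eq)
qed

locale cyc =
  fixes w :: "'a::{finite,field}" and d :: nat and NN :: nat and mm :: nat and zz :: 'a
  assumes d_pos: "d > 0" and d_dvd: "d dvd (card (UNIV::'a set) - 1)" and prim: "primitive_root w"
  and NN_def: "NN = card (UNIV::'a set) - 1" and mm_def: "mm = NN div d" and zz_def: "zz = w ^ mm"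
begin

lemma N_ge1: "NN \<ge> 1" using card_ge2[where 'a='a] NN_def by simp

lemma N_eq: "NN = d * mm" using d_dvd NN_def mm_def by simp

lemma m_pos: "mm > 0" using N_ge1 N_eq by (cases "mm") auto

lemma of_nat_N: "(of_nat NN :: 'a) = - 1"
proof -
  have "card (UNIV::'a set) \<ge> 1" using card_ge2[where 'a='a] by simp
  hence "(of_nat NN :: 'a) = of_nat (card (UNIV::'a set)) - 1" by (simp add: of_nat_diff NN_def)
  thus ?thesis by (simp add: fin_char_card)
qed

lemma of_nat_d: "(of_nat d :: 'a) \<noteq> 0"
proof
  assume "(of_nat d :: 'a) = 0"
  hence "(of_nat NN :: 'a) = 0" by (subst N_eq) simp
  thus False using of_nat_N by simp
qed

lemma of_nat_m: "(of_nat mm :: 'a) \<noteq> 0"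
proof
  assume "(of_nat mm :: 'a) = 0"
  hence "(of_nat NN :: 'a) = 0" by (subst N_eq) simp
  thus False using of_nat_N by simp
qed

lemma powN: "x \<noteq> 0 \<Longrightarrow> x ^ NN = (1::'a)" unfolding NN_def by (rule fin_pow_card_minus1)

lemma card_nonzero: "card (UNIV - {0::'a}) = NN" by (simp add: card_Diff_singleton NN_def)

lemma w_ord: assumes "0 < k" "k < NN" shows "w ^ k \<noteq> 1"
proof
  assume wk: "w ^ k = 1"
  have "UNIV - {0::'a} \<subseteq> (\<lambda>n. w ^ n) ` {..<k}"
  proof
    fix x :: 'a assume "x \<in> UNIV - {0}"
    then obtain n where x: "x = w ^ n" using prim unfolding primitive_root_def by auto
    have "w ^ n = w ^ (k * (n div k) + n mod k)" by simp
    also have "\<dots> = (w ^ k) ^ (n div k) * w ^ (n mod k)" by (simp only: power_add power_mult)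
    finally have "x = w ^ (n mod k)" using wk x by simp
    thus "x \<in> (\<lambda>n. w ^ n) ` {..<k}" using assms by (intro image_eqI[of _ _ "n mod k"]) auto
  qed
  hence "card (UNIV - {0::'a}) \<le> card ((\<lambda>n. w ^ n) ` {..<k})" by (intro card_mono) auto
  also have "\<dots> \<le> k" using card_image_le[of "{..<k}" "\<lambda>n. w ^ n"] by simp
  finally show False using card_nonzero assms by simp
qed

lemma w_zero: assumes "w = 0" shows "NN = 1"
proof -
  have "UNIV - {0::'a} \<subseteq> {1}"
  proof
    fix x :: 'a assume "x \<in> UNIV - {0}"
    then obtain n where x: "x = w ^ n" "x \<noteq> 0" using prim unfolding primitive_root_def by auto
    thus "x \<in> {1}" using assms by (cases n) simp_all
  qed
  hence "card (UNIV - {0::'a}) \<le> card {1::'a}" by (intro card_mono) simp_all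
  thus ?thesis using card_nonzero N_ge1 by simp
qed

lemma zeta_root: "d = 1 \<or> (zz ^ d = 1 \<and> (\<forall>k. 0 < k \<and> k < d \<longrightarrow> zz ^ k \<noteq> 1))"
proof (cases "w = 0")
  case True
  have "d * mm = 1" using w_zero[OF True] N_eq by simp
  hence "d = 1" by simp
  thus ?thesis by simp
next
  case False
  have "zz ^ d = w ^ NN" by (subst N_eq) (simp add: zz_def flip: power_mult, simp add: mult.commute)
  hence "zz ^ d = 1" using powN False by simp
  moreover have "zz ^ k \<noteq> 1" if "0 < k" "k < d" for k
  proof -
    have "zz ^ k = w ^ (mm * k)" by (simp add: power_mult zz_def)
    moreover have "0 < mm * k" "mm * k < NN" using that m_pos N_eq by auto
    ultimately show ?thesis using w_ord by simp
  qed
  ultimately show ?thesis by blast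
qed

lemma g_root: "mm = 1 \<or> ((w ^ d) ^ mm = 1 \<and> (\<forall>k. 0 < k \<and> k < mm \<longrightarrow> (w ^ d) ^ k \<noteq> 1))"
proof (cases "w = 0")
  case True
  have "d * mm = 1" using w_zero[OF True] N_eq by simp
  hence "mm = 1" by simp
  thus ?thesis by simp
next
  case False
  have "(w ^ d) ^ mm = w ^ NN" by (subst N_eq) (simp add: power_mult)
  hence "(w ^ d) ^ mm = 1" using powN False by simp
  moreover have "(w ^ d) ^ k \<noteq> 1" if "0 < k" "k < mm" for k
  proof -
    have "(w ^ d) ^ k = w ^ (d * k)" by (simp add: power_mult)
    moreover have "0 < d * k" "d * k < NN" using that d_pos N_eq by auto
    ultimately show ?thesis using w_ord by simp
  qed
  ultimately show ?thesis by blast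
qed

lemma wpow_nz: "w ^ n \<noteq> 0 \<or> (w = 0 \<and> NN = 1)"
  using w_zero by auto


lemma dm1: "w = 0 \<Longrightarrow> d = 1 \<and> mm = 1"
proof -
  assume "w = 0"
  hence "d * mm = 1" using w_zero N_eq by simp
  thus ?thesis by simp
qed

lemma wi_nz: "i < d \<Longrightarrow> w ^ i \<noteq> 0"
  using dm1 by (cases "w = 0") auto

lemma coset_mem: "x \<in> cyc_coset w d i \<longleftrightarrow> (\<exists>y. y \<noteq> 0 \<and> x = w ^ i * y ^ d)"
  unfolding cyc_coset_def index_subgroup_def by auto

lemma coset_pow: assumes "i < d" "x \<in> cyc_coset w d i"
  shows "x \<noteq> 0 \<and> x ^ mm = zz ^ i"
proof -
  obtain y where y: "y \<noteq> 0" "x = w ^ i * y ^ d" using assms coset_mem by auto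
  have "x ^ mm = (w ^ mm) ^ i * y ^ (d * mm)"
    by (simp add: y power_mult_distrib flip: power_mult) (simp add: mult.commute)
  also have "\<dots> = zz ^ i" using powN[OF y(1)] N_eq zz_def by simp
  finally show ?thesis using y wi_nz[OF assms(1)] by simp
qed

lemma coset_ex: assumes "x \<noteq> 0" shows "\<exists>i<d. x \<in> cyc_coset w d i"
proof -
  obtain n where x: "x = w ^ n" using prim assms unfolding primitive_root_def by auto
  have "w ^ n = w ^ (n mod d + d * (n div d))" by simp
  also have "\<dots> = w ^ (n mod d) * (w ^ (n div d)) ^ d" by (simp only: power_add flip: power_mult) (simp only: mult.commute)
  finally have e: "x = w ^ (n mod d) * (w ^ (n div d)) ^ d" using x by simp
  hence "w ^ (n div d) \<noteq> 0" using assms d_pos by auto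
  hence "x \<in> cyc_coset w d (n mod d)" using e coset_mem by blast
  thus ?thesis using d_pos by (intro exI[of _ "n mod d"]) auto
qed

lemma zeta_inj: assumes "i < d" "j < d" "zz ^ i = zz ^ j" shows "i = j"
proof (cases "d = 1")
  case True thus ?thesis using assms by simp
next
  case False
  hence z1: "zz ^ d = 1" and zk: "\<And>k. 0 < k \<Longrightarrow> k < d \<Longrightarrow> zz ^ k \<noteq> 1" using zeta_root by auto
  have z0: "zz \<noteq> 0" using z1 d_pos by (auto simp: power_0_left)
  show ?thesis
  proof (rule ccontr)
    assume "i \<noteq> j"
    then consider "i < j" | "j < i" by linarith
    thus False
    proof cases
      case 1
      have "zz ^ j = zz ^ i * zz ^ (j - i)" using 1 by (simp flip: power_add)
      hence "zz ^ (j - i) = 1" using assms(3) z0 by simp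
      thus False using zk[of "j - i"] 1 assms by simp
    next
      case 2
      have "zz ^ i = zz ^ j * zz ^ (i - j)" using 2 by (simp flip: power_add)
      hence "zz ^ (i - j) = 1" using assms(3) z0 by simp
      thus False using zk[of "i - j"] 2 assms by simp
    qed
  qed
qed

lemma coset_uniq: "i < d \<Longrightarrow> j < d \<Longrightarrow> x \<in> cyc_coset w d i \<Longrightarrow> x \<in> cyc_coset w d j \<Longrightarrow> i = j"
  using coset_pow zeta_inj by metis

lemma gen_eval: assumes "i < d" "x \<in> cyc_coset w d i"
  shows "gen_cyc_map w d a r x = a i * x ^ r i"
proof -
  have "(THE i. i < d \<and> x \<in> cyc_coset w d i) = i"
    using assms coset_uniq by blast
  thus ?thesis using coset_pow[OF assms] unfolding gen_cyc_map_def by (simp add: Let_def)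
qed


lemma mod_inj_1m: "s \<in> {1..mm} \<Longrightarrow> s' \<in> {1..mm} \<Longrightarrow> s mod mm = s' mod mm \<Longrightarrow> s = s'"
proof -
  assume a: "s \<in> {1..mm}" "s' \<in> {1..mm}" "s mod mm = s' mod mm"
  have f: "u \<in> {1..mm} \<Longrightarrow> u = (if u = mm then mm else u mod mm)" for u by auto
  show "s = s'" using f[OF a(1)] f[OF a(2)] a m_pos by (auto split: if_splits)
qed

lemma indep:
  assumes i: "i < d" and z: "\<forall>x \<in> cyc_coset w d i. (\<Sum>s\<in>{1..mm}. c s * x ^ s) = 0"
    and sig: "\<sigma> \<in> {1..mm}"
  shows "c \<sigma> = 0"
proof -
  define g where "g = w ^ d"
  define X where "X t = w ^ i * (w ^ t) ^ d" for t
  have Xin: "X t \<in> cyc_coset w d i" if "t < mm" for t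
  proof -
    have "w ^ t \<noteq> 0" using dm1 that by (cases "w = 0") auto
    thus ?thesis unfolding X_def coset_mem by blast
  qed
  have Xs: "X t ^ s = (w ^ i) ^ s * g ^ (t * s)" for t s
    unfolding X_def g_def by (simp add: power_mult_distrib flip: power_mult) (simp add: mult.commute mult.left_commute)
  have "0 = (\<Sum>t<mm. inverse g ^ (t * \<sigma>) * (\<Sum>s\<in>{1..mm}. c s * X t ^ s))"
    using z Xin by simp
  also have "\<dots> = (\<Sum>t<mm. \<Sum>s\<in>{1..mm}. c s * (w ^ i) ^ s * (g ^ (t * s) * inverse g ^ (t * \<sigma>)))"
    by (simp add: sum_distrib_left Xs mult.commute mult.left_commute)
  also have "\<dots> = (\<Sum>s\<in>{1..mm}. c s * (w ^ i) ^ s * (\<Sum>t<mm. g ^ (t * s) * inverse g ^ (t * \<sigma>)))"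
    by (subst sum.swap) (simp add: sum_distrib_left)
  also have "\<dots> = (\<Sum>s\<in>{1..mm}. if s = \<sigma> then c s * (w ^ i) ^ s * of_nat mm else 0)"
  proof (rule sum.cong[OF refl])
    fix s assume s: "s \<in> {1..mm}"
    have "(\<Sum>t<mm. g ^ (t * s) * inverse g ^ (t * \<sigma>)) = (if s mod mm = \<sigma> mod mm then of_nat mm else 0)"
      using ortho[OF m_pos] g_root unfolding g_def by blast
    also have "\<dots> = (if s = \<sigma> then of_nat mm else 0)" using mod_inj_1m[OF s sig] by auto
    finally show "c s * (w ^ i) ^ s * (\<Sum>t<mm. g ^ (t * s) * inverse g ^ (t * \<sigma>)) =
      (if s = \<sigma> then c s * (w ^ i) ^ s * of_nat mm else 0)" by simp
  qed
  also have "\<dots> = c \<sigma> * (w ^ i) ^ \<sigma> * of_nat mm" using sig by (simp add: sum.delta')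
  finally have "c \<sigma> * (w ^ i) ^ \<sigma> * of_nat mm = 0" by simp
  moreover have "(w ^ i) ^ \<sigma> \<noteq> 0" using wi_nz[OF i] by simp
  ultimately show ?thesis using of_nat_m by (metis mult_eq_0_iff)
qed


lemma ortho_d: "a < d \<Longrightarrow> c < d \<Longrightarrow>
  (\<Sum>t<d. zz ^ (t * a) * inverse zz ^ (t * c)) = (if a = c then of_nat d else 0)"
  using ortho[OF d_pos zeta_root, of a c] by simp

lemma b_prop:
  "(\<forall>i\<ge>d. (\<lambda>i. if i < d then \<Sum>j<d. zz ^ (i * j) * V j else 0) i = 0) \<and>
   (\<forall>j<d. V j = inverse (of_nat d) * (\<Sum>i<d. inverse zz ^ (i * j) * (\<lambda>i. if i < d then \<Sum>j<d. zz ^ (i * j) * V j else 0) i))"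
  (is "(\<forall>i\<ge>d. ?B i = 0) \<and> _")
proof (intro conjI allI impI)
  fix j assume j: "j < d"
  have "(\<Sum>i<d. inverse zz ^ (i * j) * ?B i) = (\<Sum>i<d. \<Sum>j'<d. V j' * (zz ^ (i * j') * inverse zz ^ (i * j)))"
    by (simp add: sum_distrib_left mult.commute mult.left_commute)
  also have "\<dots> = (\<Sum>j'<d. V j' * (\<Sum>i<d. zz ^ (i * j') * inverse zz ^ (i * j)))"
    by (subst sum.swap) (simp add: sum_distrib_left)
  also have "\<dots> = (\<Sum>j'<d. if j' = j then V j' * of_nat d else 0)"
    by (rule sum.cong[OF refl]) (simp add: ortho_d j)
  also have "\<dots> = V j * of_nat d" using j by (simp add: sum.delta')
  finally show "V j = inverse (of_nat d) * (\<Sum>i<d. inverse zz ^ (i * j) * ?B i)"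
    using of_nat_d by simp
qed simp

lemma b_explicit:
  "(THE bv :: nat \<Rightarrow> 'a. (\<forall>i\<ge>d. bv i = 0) \<and>
      (\<forall>j<d. V j = inverse (of_nat d) * (\<Sum>i<d. inverse zz ^ (i * j) * bv i)))
   = (\<lambda>i. if i < d then \<Sum>j<d. zz ^ (i * j) * V j else 0)"
proof (rule the_equality)
  show "(\<forall>i\<ge>d. (\<lambda>i. if i < d then \<Sum>j<d. zz ^ (i * j) * V j else 0) i = 0) \<and>
   (\<forall>j<d. V j = inverse (of_nat d) * (\<Sum>i<d. inverse zz ^ (i * j) * (\<lambda>i. if i < d then \<Sum>j<d. zz ^ (i * j) * V j else 0) i))"
    by (rule b_prop)
next
  fix bv :: "nat \<Rightarrow> 'a"
  assume a: "(\<forall>i\<ge>d. bv i = 0) \<and> (\<forall>j<d. V j = inverse (of_nat d) * (\<Sum>i<d. inverse zz ^ (i * j) * bv i))"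
  show "bv = (\<lambda>i. if i < d then \<Sum>j<d. zz ^ (i * j) * V j else 0)"
  proof
    fix i show "bv i = (if i < d then \<Sum>j<d. zz ^ (i * j) * V j else 0)"
    proof (cases "i < d")
      case False thus ?thesis using a by simp
    next
      case i: True
      have "(\<Sum>j<d. zz ^ (i * j) * V j) =
          (\<Sum>j<d. zz ^ (i * j) * (inverse (of_nat d) * (\<Sum>i'<d. inverse zz ^ (i' * j) * bv i')))"
        using a by (intro sum.cong) auto
      also have "\<dots> = (\<Sum>j<d. \<Sum>i'<d. inverse (of_nat d) * bv i' * (zz ^ (j * i) * inverse zz ^ (j * i')))"
        by (simp add: sum_distrib_left mult_ac)
      also have "\<dots> = (\<Sum>i'<d. inverse (of_nat d) * bv i' * (\<Sum>j<d. zz ^ (j * i) * inverse zz ^ (j * i')))"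
        by (subst sum.swap) (simp add: sum_distrib_left)
      also have "\<dots> = (\<Sum>i'<d. if i' = i then inverse (of_nat d) * bv i' * of_nat d else 0)"
        by (rule sum.cong[OF refl]) (auto simp: ortho_d i)
      also have "\<dots> = bv i" using i of_nat_d by (simp add: sum.delta')
      finally show ?thesis using i by simp
    qed
  qed
qed


lemma R_facts:
  fixes P :: "'a poly"
  assumes R_def: "R = {rem1 mm n | n. coeff P n \<noteq> 0}"
  assumes \<rho>_def: "\<rho> = (\<lambda>l. sorted_list_of_set R ! l)"
  shows "R \<subseteq> {1..mm}" "finite R" "\<And>l. l < card R \<Longrightarrow> \<rho> l \<in> R"
    "inj_on \<rho> {..<card R}" "\<And>r. r \<in> R \<Longrightarrow> \<exists>l<card R. \<rho> l = r"
    "\<And>l. l < card R \<Longrightarrow> \<rho> l \<in> {1..mm}"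
proof -
  show RS: "R \<subseteq> {1..mm}"
  proof
    fix r assume "r \<in> R"
    then obtain n where "r = rem1 mm n" using R_def by blast
    thus "r \<in> {1..mm}" using rem1_range[OF m_pos] by simp
  qed
  show fR: "finite R" using RS finite_subset by blast
  have bij: "bij_betw \<rho> {..<card R} R" unfolding \<rho>_def
    by (rule bij_betw_nth) (use fR in auto)
  show "\<And>l. l < card R \<Longrightarrow> \<rho> l \<in> R" using bij bij_betwE by blast
  thus "\<And>l. l < card R \<Longrightarrow> \<rho> l \<in> {1..mm}" using RS by blast
  show "inj_on \<rho> {..<card R}" using bij bij_betw_def by blast
  show "\<And>r. r \<in> R \<Longrightarrow> \<exists>l<card R. \<rho> l = r" using bij by (metis bij_betw_imp_surj_on imageE lessThan_iff)
qed

lemma eval_coset: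
  fixes P :: "'a poly"
  assumes deg: "degree P \<le> NN" and i: "i < d" and x: "x \<in> cyc_coset w d i"
  defines "R \<equiv> {rem1 mm n | n. coeff P n \<noteq> 0}"
  defines "\<rho> \<equiv> (\<lambda>l. sorted_list_of_set R ! l)"
  shows "poly P x = coeff P 0 + (\<Sum>l<card R. (\<Sum>j<d. zz ^ (i * j) * coeff P (j * mm + \<rho> l)) * x ^ \<rho> l)"
proof -
  note RF = R_facts[OF R_def[THEN meta_eq_to_obj_eq] \<rho>_def[THEN meta_eq_to_obj_eq]]
  let ?k = "card R"
  let ?h = "\<lambda>n. coeff P n * x ^ n"
  let ?F = "\<lambda>(l, j). j * mm + \<rho> l"
  let ?T = "?F ` ({..<?k} \<times> {..<d})"
  have "poly P x = (\<Sum>n\<le>degree P. ?h n)" by (rule poly_altdef)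
  also have "\<dots> = (\<Sum>n\<le>NN. ?h n)"
    by (rule sum.mono_neutral_left) (use deg in \<open>auto simp: coeff_eq_0\<close>)
  also have "{..NN} = insert 0 {1..NN}" by auto
  also have "(\<Sum>n\<in>insert 0 {1..NN}. ?h n) = coeff P 0 + (\<Sum>n\<in>{1..NN}. ?h n)" by simp
  also have "(\<Sum>n\<in>{1..NN}. ?h n) = (\<Sum>n\<in>?T. ?h n)"
  proof (rule sum.mono_neutral_right)
    show "?T \<subseteq> {1..NN}"
    proof
      fix n assume "n \<in> ?T"
      then obtain l j where lj: "l < ?k" "j < d" "n = j * mm + \<rho> l" by auto
      have r: "\<rho> l \<in> {1..mm}" using RF(6) lj by blast
      have "j * mm + mm \<le> d * mm" using lj(2)
        by (metis add.commute mult.commute mult_Suc_right mult_le_mono2 Suc_leI)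
      thus "n \<in> {1..NN}" using r lj N_eq by (auto simp: mult.commute)
    qed
    show "\<forall>n\<in>{1..NN} - ?T. ?h n = 0"
    proof
      fix n assume n: "n \<in> {1..NN} - ?T"
      show "?h n = 0"
      proof (rule ccontr)
        assume "?h n \<noteq> 0"
        hence c: "coeff P n \<noteq> 0" by auto
        hence "rem1 mm n \<in> R" unfolding R_def by blast
        then obtain l where l: "l < ?k" "\<rho> l = rem1 mm n" using RF(5) by blast
        obtain j where j: "j < d" "n = j * mm + rem1 mm n"
          using decomp[OF m_pos, of n d] n N_eq by (auto simp: mult.commute)
        have "n \<in> ?T" using l j by (intro image_eqI[of _ _ "(l, j)"]) auto
        thus False using n by blast
      qed
    qed
  qed simp
  also have "(\<Sum>n\<in>?T. ?h n) = (\<Sum>p\<in>{..<?k} \<times> {..<d}. ?h (?F p))"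
  proof (rule sum.reindex[unfolded comp_def])
    show "inj_on ?F ({..<?k} \<times> {..<d})"
    proof (rule inj_onI, clarify)
      fix l j l' j' assume a: "l < ?k" "j < d" "l' < ?k" "j' < d" "j * mm + \<rho> l = j' * mm + \<rho> l'"
      have "(j * mm + \<rho> l) mod mm = (j' * mm + \<rho> l') mod mm" using a by simp
      hence "\<rho> l mod mm = \<rho> l' mod mm" by simp
      hence "\<rho> l = \<rho> l'" by (rule mod_inj_1m[OF RF(6)[OF a(1)] RF(6)[OF a(3)]])
      hence ll: "l = l'" by (rule inj_onD[OF RF(4)]) (use a in auto)
      hence "j * mm = j' * mm" using a by simp
      thus "l = l' \<and> j = j'" using ll m_pos by simp
    qed
  qed
  also have "\<dots> = (\<Sum>l<?k. \<Sum>j<d. ?h (j * mm + \<rho> l))"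
    unfolding sum.cartesian_product by (intro sum.cong refl) auto
  also have "\<dots> = (\<Sum>l<?k. (\<Sum>j<d. zz ^ (i * j) * coeff P (j * mm + \<rho> l)) * x ^ \<rho> l)"
  proof (rule sum.cong[OF refl])
    fix l
    have xm: "x ^ mm = zz ^ i" using coset_pow[OF i x] by simp
    have hj: "?h (j * mm + \<rho> l) = zz ^ (i * j) * coeff P (j * mm + \<rho> l) * x ^ \<rho> l" for j
    proof -
      have "x ^ (j * mm + \<rho> l) = zz ^ (i * j) * x ^ \<rho> l"
        by (simp add: power_add power_mult xm flip: mult.commute[of mm j])
      thus ?thesis by simp
    qed
    show "(\<Sum>j<d. ?h (j * mm + \<rho> l)) = (\<Sum>j<d. zz ^ (i * j) * coeff P (j * mm + \<rho> l)) * x ^ \<rho> l"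
      unfolding sum_distrib_right by (rule sum.cong[OF refl]) (rule hj)
  qed
  finally show ?thesis .
qed

end


theorem theorem2:
  fixes P :: "'a::{finite,field} poly" and w :: 'a and d :: nat
  assumes d_pos: "d > 0"
    and d_dvd: "d dvd (card (UNIV :: 'a set) - 1)"
    and prim: "primitive_root w"
    and P_nz: "P \<noteq> 0"
    and P_deg: "degree P \<le> card (UNIV :: 'a set) - 1"
  defines "m \<equiv> (card (UNIV :: 'a set) - 1) div d"
  defines "\<zeta> \<equiv> w ^ m"
  defines "R \<equiv> {rem1 m n | n. coeff P n \<noteq> 0}"
  defines "k \<equiv> card R"
  defines "\<rho> \<equiv> (\<lambda>l. sorted_list_of_set R ! l)"
  defines "v \<equiv> (\<lambda>l j. coeff P (j * m + \<rho> l))"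
  defines "b \<equiv> (\<lambda>l. THE bv :: nat \<Rightarrow> 'a. (\<forall>i\<ge>d. bv i = 0) \<and>
              (\<forall>j<d. v l j = inverse (of_nat d) * (\<Sum>i<d. inverse \<zeta> ^ (i * j) * bv i)))"
  defines "S \<equiv> (\<lambda>l. if l = 0
              then {i. i < d \<and> (b 0 i \<noteq> 0 \<or> (\<forall>l'<k. b l' i = 0))}
              else {i. i < d \<and> b l i \<noteq> 0})"
  defines "cond \<equiv> (poly P 0 = 0 \<and> k \<le> d \<and>
              (\<forall>l<k. \<forall>l'<k. l \<noteq> l' \<longrightarrow> S l \<inter> S l' = {}) \<and>
              (\<Union>l<k. S l) = {0..<d})"
  defines "lidx \<equiv> (\<lambda>i. THE l. l < k \<and> i \<in> S l)"
  shows "((\<exists>a r. (\<forall>i<d. r i \<in> {1..m}) \<and> poly_form P (gen_cyc_map w d a r)) \<longleftrightarrow> cond)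
         \<and> (cond \<longrightarrow> poly_form P (gen_cyc_map w d (\<lambda>i. b (lidx i) i) (\<lambda>i. \<rho> (lidx i))))"
proof -
  interpret C: cyc w d "card (UNIV :: 'a set) - 1" m \<zeta>
    by unfold_locales (use d_pos d_dvd prim in \<open>simp_all add: m_def \<zeta>_def\<close>)
  note RF = C.R_facts[OF R_def[THEN meta_eq_to_obj_eq] \<rho>_def[THEN meta_eq_to_obj_eq]]
  have kR: "k = card R" by (simp add: k_def)
  have bexp: "b l = (\<lambda>i. if i < d then \<Sum>j<d. \<zeta> ^ (i * j) * v l j else 0)" for l
    unfolding b_def by (rule C.b_explicit)
  have bprop: "\<forall>j<d. v l j = inverse (of_nat d) * (\<Sum>i<d. inverse \<zeta> ^ (i * j) * b l i)" for l
    using C.b_prop[of "v l"] by (subst bexp) simp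
  have eval: "poly P x = coeff P 0 + (\<Sum>l<k. b l i * x ^ \<rho> l)"
    if i: "i < d" and x: "x \<in> cyc_coset w d i" for i x
  proof -
    have "poly P x = coeff P 0 + (\<Sum>l<card R. (\<Sum>j<d. \<zeta> ^ (i * j) * coeff P (j * m + \<rho> l)) * x ^ \<rho> l)"
      using C.eval_coset[OF P_deg i x] unfolding R_def \<rho>_def by simp
    thus ?thesis using i by (simp add: bexp v_def kR)
  qed
  have R_ne: "k > 0"
  proof -
    obtain n where "coeff P n \<noteq> 0" using P_nz by (metis leading_coeff_0_iff)
    hence "rem1 m n \<in> R" unfolding R_def by blast
    thus ?thesis using RF(2) kR card_gt_0_iff by blast
  qed
  have A: "poly_form P (gen_cyc_map w d (\<lambda>i. b (lidx i) i) (\<lambda>i. \<rho> (lidx i)))" if c: cond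
  proof -
    from c have P0: "poly P 0 = 0" and disj: "\<forall>l<k. \<forall>l'<k. l \<noteq> l' \<longrightarrow> S l \<inter> S l' = {}"
      and un: "(\<Union>l<k. S l) = {0..<d}" unfolding cond_def by auto
    have c0: "coeff P 0 = 0" using P0 by (simp add: poly_0_coeff_0)
    have lid: "lidx i < k \<and> i \<in> S (lidx i)" if i: "i < d" for i
    proof -
      have ex: "\<exists>l. l < k \<and> i \<in> S l" using un i by auto
      have "\<exists>!l. l < k \<and> i \<in> S l"
        using ex disj by blast
      thus ?thesis unfolding lidx_def by (rule theI')
    qed
    have bz: "b l i = 0" if i: "i < d" and l: "l < k" "l \<noteq> lidx i" for i l
    proof (rule ccontr)
      assume nz: "b l i \<noteq> 0"
      have "i \<in> S l" using nz i unfolding S_def by auto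
      thus False using lid[OF i] disj l by blast
    qed
    show ?thesis unfolding poly_form_def
    proof (intro conjI allI)
      show "degree P \<le> card (UNIV :: 'a set) - 1" by (rule P_deg)
      fix x :: 'a
      show "poly P x = gen_cyc_map w d (\<lambda>i. b (lidx i) i) (\<lambda>i. \<rho> (lidx i)) x"
      proof (cases "x = 0")
        case True thus ?thesis using P0 unfolding gen_cyc_map_def by simp
      next
        case False
        then obtain i where i: "i < d" "x \<in> cyc_coset w d i" using C.coset_ex by blast
        have L: "lidx i < k" using lid[OF i(1)] by simp
        have "(\<Sum>l<k. b l i * x ^ \<rho> l) = b (lidx i) i * x ^ \<rho> (lidx i) + (\<Sum>l\<in>{..<k} - {lidx i}. b l i * x ^ \<rho> l)"
          using L by (subst sum.remove[of _ "lidx i"]) auto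
        also have "(\<Sum>l\<in>{..<k} - {lidx i}. b l i * x ^ \<rho> l) = 0"
          using bz[OF i(1)] by (intro sum.neutral) auto
        finally have "poly P x = b (lidx i) i * x ^ \<rho> (lidx i)"
          using eval[OF i] c0 by simp
        thus ?thesis using C.gen_eval[OF i] by simp
      qed
    qed
  qed
  have B: "\<exists>a r. (\<forall>i<d. r i \<in> {1..m}) \<and> poly_form P (gen_cyc_map w d a r)" if c: cond
  proof -
    from c have disj: "\<forall>l<k. \<forall>l'<k. l \<noteq> l' \<longrightarrow> S l \<inter> S l' = {}"
      and un: "(\<Union>l<k. S l) = {0..<d}" unfolding cond_def by auto
    have "\<rho> (lidx i) \<in> {1..m}" if i: "i < d" for i
    proof -
      have ex: "\<exists>l. l < k \<and> i \<in> S l" using un i by auto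
      have "\<exists>!l. l < k \<and> i \<in> S l" using ex disj by blast
      hence "lidx i < k" unfolding lidx_def by (metis (mono_tags, lifting) theI')
      thus ?thesis using RF(6) kR by simp
    qed
    hence "\<forall>i<d. (\<lambda>i. \<rho> (lidx i)) i \<in> {1..m}" by simp
    thus ?thesis using A[OF c]
      by (intro exI[of _ "\<lambda>i. b (lidx i) i"] exI[of _ "\<lambda>i. \<rho> (lidx i)"]) simp
  qed
  have Cc: cond if ex: "\<exists>a r. (\<forall>i<d. r i \<in> {1..m}) \<and> poly_form P (gen_cyc_map w d a r)"
  proof -
    obtain a r where r: "\<forall>i<d. r i \<in> {1..m}" and pf: "poly_form P (gen_cyc_map w d a r)" using ex by blast
    have pe: "poly P x = gen_cyc_map w d a r x" for x using pf unfolding poly_form_def by blast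
    have P0: "poly P 0 = 0" using pe[of 0] unfolding gen_cyc_map_def by simp
    have c0: "coeff P 0 = 0" using P0 by (simp add: poly_0_coeff_0)
    have key: "b l i = (if \<rho> l = r i then a i else 0)" if i: "i < d" and l: "l < k" for i l
    proof -
      define c where "c s = (\<Sum>l'<k. if \<rho> l' = s then b l' i else 0) - (if s = r i then a i else 0)" for s
      have ri: "r i \<in> {1..m}" using r i by blast
      have z: "\<forall>x \<in> cyc_coset w d i. (\<Sum>s\<in>{1..m}. c s * x ^ s) = 0"
      proof
        fix x assume x: "x \<in> cyc_coset w d i"
        have "(\<Sum>s\<in>{1..m}. c s * x ^ s) =
            (\<Sum>s\<in>{1..m}. \<Sum>l'<k. if \<rho> l' = s then b l' i * x ^ s else 0) - (\<Sum>s\<in>{1..m}. if s = r i then a i * x ^ s else 0)"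
        proof -
          have "c s * x ^ s = (\<Sum>l'<k. if \<rho> l' = s then b l' i * x ^ s else 0) - (if s = r i then a i * x ^ s else 0)" for s
            unfolding c_def left_diff_distrib sum_distrib_right by (auto intro!: sum.cong)
          thus ?thesis by (simp add: sum_subtractf)
        qed
        also have "(\<Sum>s\<in>{1..m}. \<Sum>l'<k. if \<rho> l' = s then b l' i * x ^ s else 0) = (\<Sum>l'<k. b l' i * x ^ \<rho> l')"
          by (subst sum.swap) (intro sum.cong refl, use RF(6) kR in \<open>simp add: sum.delta'\<close>)
        also have "(\<Sum>s\<in>{1..m}. if s = r i then a i * x ^ s else 0) = a i * x ^ r i"
          using ri by (simp add: sum.delta)
        also have "(\<Sum>l'<k. b l' i * x ^ \<rho> l') = poly P x" using eval[OF i x] c0 by simp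
        also have "poly P x = a i * x ^ r i" using pe C.gen_eval[OF i x] by simp
        finally show "(\<Sum>s\<in>{1..m}. c s * x ^ s) = 0" by simp
      qed
      have "c (\<rho> l) = 0" using C.indep[OF i z] RF(6) l kR by simp
      moreover have "(\<Sum>l'<k. if \<rho> l' = \<rho> l then b l' i else 0) = b l i"
      proof -
        have "(\<Sum>l'<k. if \<rho> l' = \<rho> l then b l' i else 0) = (\<Sum>l'<k. if l' = l then b l' i else 0)"
          using RF(4) l kR by (intro sum.cong refl) (auto simp: inj_on_def)
        thus ?thesis using l by (simp add: sum.delta)
      qed
      ultimately show ?thesis unfolding c_def by (simp split: if_splits)
    qed
    have uniq: "l = l'" if "i < d" "l < k" "l' < k" "b l i \<noteq> 0" "b l' i \<noteq> 0" for i l l'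
    proof -
      have "\<rho> l = r i" "\<rho> l' = r i" using key that by (auto split: if_splits)
      thus ?thesis using RF(4) that kR by (auto simp: inj_on_def)
    qed
    have disj: "\<forall>l<k. \<forall>l'<k. l \<noteq> l' \<longrightarrow> S l \<inter> S l' = {}"
    proof (intro allI impI)
      fix l l' assume ll: "l < k" "l' < k" "l \<noteq> l'"
      show "S l \<inter> S l' = {}"
      proof (rule ccontr)
        assume "S l \<inter> S l' \<noteq> {}"
        then obtain i where i: "i \<in> S l" "i \<in> S l'" by blast
        have id: "i < d" using i(1) unfolding S_def by (auto split: if_splits)
        show False
        proof (cases "l = 0")
          case True
          hence l'0: "l' \<noteq> 0" using ll by simp
          hence nz': "b l' i \<noteq> 0" using i(2) unfolding S_def by simp
          have "b 0 i \<noteq> 0" using i(1) True nz' ll(2) unfolding S_def by auto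
          thus False using uniq[OF id _ ll(2) _ nz'] R_ne l'0 by blast
        next
          case False
          hence nz: "b l i \<noteq> 0" using i(1) unfolding S_def by simp
          show False
          proof (cases "l' = 0")
            case True
            have "b 0 i \<noteq> 0" using i(2) True nz ll(1) unfolding S_def by auto
            thus False using uniq[OF id ll(1) _ nz] R_ne False by blast
          next
            case False
            hence "b l' i \<noteq> 0" using i(2) unfolding S_def by simp
            thus False using uniq[OF id ll(1) ll(2) nz] ll by blast
          qed
        qed
      qed
    qed
    have un: "(\<Union>l<k. S l) = {0..<d}"
    proof
      show "(\<Union>l<k. S l) \<subseteq> {0..<d}" unfolding S_def by auto
      show "{0..<d} \<subseteq> (\<Union>l<k. S l)"
      proof
        fix i assume "i \<in> {0..<d}"
        hence i: "i < d" by simp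
        show "i \<in> (\<Union>l<k. S l)"
        proof (cases "\<exists>l<k. b l i \<noteq> 0")
          case True
          then obtain l where l: "l < k" "b l i \<noteq> 0" by blast
          hence "i \<in> S l" using i unfolding S_def by auto
          thus ?thesis using l by blast
        next
          case False
          hence "i \<in> S 0" using i unfolding S_def by auto
          thus ?thesis using R_ne by blast
        qed
      qed
    qed
    have nzb: "\<exists>i<d. b l i \<noteq> 0" if l: "l < k" for l
    proof (rule ccontr)
      assume "\<not> (\<exists>i<d. b l i \<noteq> 0)"
      hence bz: "\<forall>i<d. b l i = 0" by blast
      have vz: "v l j = 0" if "j < d" for j using bprop[of l] bz that by simp
      have "\<rho> l \<in> R" using RF(3) l kR by simp
      then obtain n where n: "\<rho> l = rem1 m n" "coeff P n \<noteq> 0" unfolding R_def by blast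
      have "n \<noteq> 0" using n(2) c0 by (metis)
      moreover have "n \<le> card (UNIV :: 'a set) - 1" using n(2) P_deg le_degree by fastforce
      ultimately obtain j where j: "j < d" "n = j * m + rem1 m n"
        using decomp[OF C.m_pos, of n d] C.N_eq by (auto simp: mult.commute)
      have "v l j = coeff P n" unfolding v_def using j n by simp
      thus False using vz[OF j(1)] n by simp
    qed
    define f where "f l = (SOME i. i < d \<and> b l i \<noteq> 0)" for l
    have f: "f l < d \<and> b l (f l) \<noteq> 0" if "l < k" for l
      unfolding f_def using someI_ex[OF nzb[OF that]] .
    have "inj_on f {..<k}"
    proof (rule inj_onI)
      fix l l' assume "l \<in> {..<k}" "l' \<in> {..<k}" "f l = f l'"
      hence a: "l < k" "l' < k" "f l = f l'" by auto
      have "b l (f l) \<noteq> 0" "b l' (f l) \<noteq> 0" "f l < d" using f[OF a(1)] f[OF a(2)] a(3) by auto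
      thus "l = l'" using uniq[of "f l" l l'] a by blast
    qed
    moreover have "f ` {..<k} \<subseteq> {..<d}" using f by auto
    ultimately have "card {..<k} \<le> card {..<d}" by (intro card_inj_on_le) auto
    hence "k \<le> d" by simp
    thus cond unfolding cond_def using P0 disj un by blast
  qed
  show ?thesis using A B Cc by blast
qed

end
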